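(* In the setting below, for $\ell\ge1$ define $q_\ell:D_\ell(G^* )\otimes\bigwedge^{n+\ell}F\to\bigwedge^\ell U$ by $$g_1^{*(\alpha_1)}\cdots g_n^{*(\alpha_n)}\otimes f_{\tau_1}\wedge\cdots\wedge f_{\tau_\ell}\wedge f_\sigma\ \mapsto\ \sum_{L\in\mathcal L_{\alpha,\tau}}e_{L_1}\wedge\cdots\wedge e_{L_\ell}$$ for every $\tau=(\tau_1<\cdots<\tau_\ell)$ with $\tau\cap\sigma=\varnothing$ and $|\alpha|=\ell$, and sending every basis element $g^{*(\alpha)}\otimes f_\rho$ with $\rho\not\supseteq\sigma$ to $0$. Then for every $\ell\ge2$, $m_\ell\circ q_\ell=q_{\ell-1}\circ\partial_{\ell+1}$, where $\partial_{\ell+1}:D_\ell(G^* )\otimes\bigwedge^{n+\ell}F\to D_{\ell-1}(G^* )\otimes\bigwedge^{n+\ell-1}F$ is the Eagon–Northcott differential and $m_\ell:\bigwedge^\ell U\to\bigwedge^{\ell-1}U$ is the Koszul differential.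
   Context: Setting: $R=k[x_{ij}\mid1\le i\le n,1\le j\le m]$ over a field $k$, $n\le m$, $M=(x_{ij})$ generic, viewed as $F\to G$ with bases $f_1,\dots,f_m$ of $F$, $g_1,\dots,g_n$ of $G$, dual basis $g_i^*$ of $G^*$. $D_\ell(G^* )$ is the $\ell$th divided power, with basis $g^{*(\alpha)}=g_1^{*(\alpha_1)}\cdots g_n^{*(\alpha_n)}$, $|\alpha|=\ell$. For $\rho=(\rho_1<\dots<\rho_p)$, $f_\rho=f_{\rho_1}\wedge\cdots\wedge f_{\rho_p}$. Fix $\sigma=(\sigma_1<\dots<\sigma_n)$. The Eagon–Northcott complex $E_\bullet$ has $E_0=R$, $E_1=\bigwedge^nF$, $E_{\ell+1}=D_\ell(G^* )\otimes\bigwedge^{n+\ell}F$; $\partial_1(f_\rho)=\det$ of the columns $\rho$ of $M$, and for $\ell\ge1$, $\partial_{\ell+1}(g^{*(\alpha)}\otimes f_{\rho_1}\wedge\cdots\wedge f_{\rho_p})=\sum_{i:\alpha_i>0}\sum_{s=1}^p(-1)^{s+1}x_{i\rho_s}\,g^{*(\alpha-\varepsilon_i)}\otimes f_{\rho_1}\wedge\cdots\widehat{f_{\rho_s}}\cdots\wedge f_{\rho_p}$ (with $D_0(G^* )=R$). $U$ is free with basis $e_{ij}$, $1\le i\le n$, $j\notin\sigma$; for a pair $L=(i,j)$, $e_L=e_{ij}$; $m_\ell(e_{L_1}\wedge\cdots\wedge e_{L_\ell})=\sum_s(-1)^{s+1}x_{L_s}e_{L_1}\wedge\cdots\widehat{e_{L_s}}\cdots\wedge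 e_{L_\ell}$ where $x_{(i,j)}=x_{ij}$. For $\tau=(\tau_1<\dots<\tau_\ell)$ and $\alpha\in\mathbb Z^n_{\ge0}$, $\mathcal L_{\alpha,\tau}$ is the set of sets $\{(r_1,\tau_1),\dots,(r_\ell,\tau_\ell)\}$ with $r_s\in\{i:\alpha_i\ne0\}$ and $|\{s: r_s=j\}|=\alpha_j$ for all $j$; its elements are written $L=(L_1,\dots,L_\ell)$ with $L_s=(r_s,\tau_s)$ ordered by $\tau$. *)

theory Defs
  imports Main
begin

text \<open>Free modules are represented by coefficient functions on a basis index set.
  Rows are indexed by 1..n, columns by 1..m.  A wedge f_rho (rho increasing) is
  represented by the finite set rho; a divided power monomial g^{*(alpha)} by the
  exponent function alpha (supported in 1..n).\<close>

definition lin :: "('b \<Rightarrow> 'c \<Rightarrow> 'a::comm_ring_1) \<Rightarrow> ('b \<Rightarrow> 'a) \<Rightarrow> 'c \<Rightarrow> 'a" where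
  "lin f v = (\<lambda>c. \<Sum>b\<in>{b. v b \<noteq> 0}. v b * f b c)"

definition EN_basis :: "nat \<Rightarrow> nat \<Rightarrow> nat \<Rightarrow> ((nat \<Rightarrow> nat) \<times> nat set) set" where
  "EN_basis n m l = {(\<alpha>, \<rho>). (\<forall>i. \<alpha> i \<noteq> 0 \<longrightarrow> i \<in> {1..n}) \<and> (\<Sum>i\<in>{1..n}. \<alpha> i) = l
                      \<and> \<rho> \<subseteq> {1..m} \<and> card \<rho> = n + l}"

text \<open>Eagon-Northcott differential on a basis element g^{*(alpha)} tensor f_rho
  (for |alpha| >= 1); removing the s-th element c of rho gives sign (-1)^(s+1),
  where s - 1 = card of elements of rho below c.\<close>
definition en_diff :: "nat \<Rightarrow> (nat \<Rightarrow> nat \<Rightarrow> 'a::comm_ring_1)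
      \<Rightarrow> (nat \<Rightarrow> nat) \<times> nat set \<Rightarrow> (nat \<Rightarrow> nat) \<times> nat set \<Rightarrow> 'a" where
  "en_diff n x b b' = (case b of (\<alpha>, \<rho>) \<Rightarrow> case b' of (\<beta>, \<rho>') \<Rightarrow>
     (\<Sum>i\<in>{1..n}. \<Sum>c\<in>\<rho>.
        if 0 < \<alpha> i \<and> \<beta> = \<alpha>(i := \<alpha> i - 1) \<and> \<rho>' = \<rho> - {c}
        then (-1) ^ card {r\<in>\<rho>. r < c} * x i c else 0))"

text \<open>A basis element e_{L_1} wedge ... wedge e_{L_l} of wedge^l U is represented by the
  set {L_1,...,L_l} with L_1 < ... < L_l in this order; for pairs with distinct
  columns this is the ordering by columns used in the paper.\<close>
definition pair_less :: "nat \<times> nat \<Rightarrow> nat \<times> nat \<Rightarrow> bool" where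
  "pair_less L L' = (snd L < snd L' \<or> (snd L = snd L' \<and> fst L < fst L'))"

definition koszul :: "(nat \<Rightarrow> nat \<Rightarrow> 'a::comm_ring_1)
      \<Rightarrow> (nat \<times> nat) set \<Rightarrow> (nat \<times> nat) set \<Rightarrow> 'a" where
  "koszul x E E' = (\<Sum>L\<in>E. if E' = E - {L}
        then (-1) ^ card {L'\<in>E. pair_less L' L} * x (fst L) (snd L) else 0)"

definition Lset :: "(nat \<Rightarrow> nat) \<Rightarrow> nat set \<Rightarrow> (nat \<times> nat) set set" where
  "Lset \<alpha> \<tau> = {E. \<exists>r. (\<forall>t\<in>\<tau>. \<alpha> (r t) \<noteq> 0) \<and> (\<forall>j. card {t\<in>\<tau>. r t = j} = \<alpha> j)
                     \<and> E = (\<lambda>t. (r t, t)) ` \<tau>}"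

text \<open>If sigma is contained
  in rho, write tau = rho - sigma; then f_tau wedge f_sigma = sgn * f_rho with
  sgn = (-1)^(number of pairs t in tau, s in sigma with s < t), so
  q(g^{*(alpha)} tensor f_rho) = sgn * sum over L in \<L>_{alpha,tau}.\<close>
definition qmap :: "nat set \<Rightarrow> (nat \<Rightarrow> nat) \<times> nat set \<Rightarrow> (nat \<times> nat) set \<Rightarrow> 'a::comm_ring_1" where
  "qmap \<sigma> b E = (case b of (\<alpha>, \<rho>) \<Rightarrow>
     if \<sigma> \<subseteq> \<rho> \<and> E \<in> Lset \<alpha> (\<rho> - \<sigma>)
     then (-1) ^ card {(t, s). t \<in> \<rho> - \<sigma> \<and> s \<in> \<sigma> \<and> s < t} else 0)"

end

theory Submission
  imports Defs
begin


lemma lin_eq: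
  assumes "finite S" "{b. v b \<noteq> 0} \<subseteq> S"
  shows "lin f v c = (\<Sum>b\<in>S. v b * f b c)"
  unfolding lin_def
  by (rule sum.mono_neutral_left) (use assms in auto)

lemma Lset_alt:
  assumes "finite \<tau>"
  shows "E \<in> Lset \<alpha> \<tau> \<longleftrightarrow> (\<exists>r. (\<forall>j. card {t\<in>\<tau>. r t = j} = \<alpha> j) \<and> E = (\<lambda>t. (r t, t)) ` \<tau>)"
proof
  assume "E \<in> Lset \<alpha> \<tau>" then show "\<exists>r. (\<forall>j. card {t\<in>\<tau>. r t = j} = \<alpha> j) \<and> E = (\<lambda>t. (r t, t)) ` \<tau>"
    unfolding Lset_def by blast
next
  assume "\<exists>r. (\<forall>j. card {t\<in>\<tau>. r t = j} = \<alpha> j) \<and> E = (\<lambda>t. (r t, t)) ` \<tau>"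
  then obtain r where r: "\<forall>j. card {t\<in>\<tau>. r t = j} = \<alpha> j" "E = (\<lambda>t. (r t, t)) ` \<tau>" by blast
  have "\<forall>t\<in>\<tau>. \<alpha> (r t) \<noteq> 0"
  proof
    fix t assume t: "t \<in> \<tau>"
    have "card {t'\<in>\<tau>. r t' = r t} \<noteq> 0" using t assms by (subst card_0_eq) auto
    then show "\<alpha> (r t) \<noteq> 0" using r(1) by metis
  qed
  then show "E \<in> Lset \<alpha> \<tau>" unfolding Lset_def using r by blast
qed

lemma Lset_sub:
  assumes "\<forall>i. \<alpha> i \<noteq> 0 \<longrightarrow> i \<in> {1..n}" "E \<in> Lset \<alpha> \<tau>"
  shows "E \<subseteq> {1..n} \<times> \<tau>"
  using assms unfolding Lset_def by fastforce

lemma finite_Lset: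
  assumes "\<forall>i. \<alpha> i \<noteq> 0 \<longrightarrow> i \<in> {1..n}" "finite \<tau>"
  shows "finite (Lset \<alpha> \<tau>)"
proof (rule finite_subset)
  show "Lset \<alpha> \<tau> \<subseteq> Pow ({1..n} \<times> \<tau>)" using Lset_sub[OF assms(1)] by blast
qed (use assms in auto)

lemma Lkey:
  assumes fin: "finite \<tau>" and c: "c \<in> \<tau>" and ai: "0 < \<alpha> i"
  shows "((i,c) \<notin> E' \<and> insert (i,c) E' \<in> Lset \<alpha> \<tau>) \<longleftrightarrow> E' \<in> Lset (\<alpha>(i := \<alpha> i - 1)) (\<tau> - {c})"
proof
  assume h: "(i,c) \<notin> E' \<and> insert (i,c) E' \<in> Lset \<alpha> \<tau>"
  then obtain r where r: "\<forall>j. card {t\<in>\<tau>. r t = j} = \<alpha> j" "insert (i,c) E' = (\<lambda>t. (r t, t)) ` \<tau>"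
    using Lset_alt[OF fin] by blast
  have rc: "r c = i" using r(2) by (metis (no_types, lifting) Pair_inject image_iff insertI1)
  have E': "E' = (\<lambda>t. (r t, t)) ` (\<tau> - {c})"
  proof -
    have "E' = insert (i,c) E' - {(i,c)}" using h by blast
    also have "\<dots> = (\<lambda>t. (r t, t)) ` (\<tau> - {c})" unfolding r(2) using rc by auto
    finally show ?thesis .
  qed
  have cnt: "card {t\<in>\<tau> - {c}. r t = j} = (\<alpha>(i := \<alpha> i - 1)) j" for j
  proof (cases "j = i")
    case True
    have "{t\<in>\<tau>. r t = j} = insert c {t\<in>\<tau> - {c}. r t = j}" using True rc c by auto
    then have "card {t\<in>\<tau>. r t = j} = Suc (card {t\<in>\<tau> - {c}. r t = j})"
      using fin by (simp add: card_insert_if)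
    then show ?thesis using r(1) True by (metis diff_Suc_1 fun_upd_same)
  next
    case False
    have "{t\<in>\<tau>. r t = j} = {t\<in>\<tau> - {c}. r t = j}" using False rc by auto
    then show ?thesis using r(1) False by (metis fun_upd_other)
  qed
  show "E' \<in> Lset (\<alpha>(i := \<alpha> i - 1)) (\<tau> - {c})"
    using Lset_alt[of "\<tau> - {c}"] fin cnt E' by blast
next
  assume h: "E' \<in> Lset (\<alpha>(i := \<alpha> i - 1)) (\<tau> - {c})"
  then obtain r where r: "\<forall>j. card {t\<in>\<tau> - {c}. r t = j} = (\<alpha>(i := \<alpha> i - 1)) j"
     "E' = (\<lambda>t. (r t, t)) ` (\<tau> - {c})"
    using Lset_alt[of "\<tau> - {c}"] fin by blast
  define r' where "r' = r(c := i)"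
  have g: "insert (i,c) E' = (\<lambda>t. (r' t, t)) ` \<tau>"
    using c unfolding r(2) r'_def by auto
  have cnt: "card {t\<in>\<tau>. r' t = j} = \<alpha> j" for j
  proof (cases "j = i")
    case True
    have "{t\<in>\<tau>. r' t = j} = insert c {t\<in>\<tau> - {c}. r t = j}" using True c unfolding r'_def by auto
    then have "card {t\<in>\<tau>. r' t = j} = Suc (card {t\<in>\<tau> - {c}. r t = j})"
      using fin by (simp add: card_insert_if)
    then show ?thesis using r(1) True ai by simp
  next
    case False
    have "{t\<in>\<tau>. r' t = j} = {t\<in>\<tau> - {c}. r t = j}" using False unfolding r'_def by auto
    then show ?thesis using r(1) False by simp
  qed
  have "(i,c) \<notin> E'" using r(2) by auto
  then show "(i,c) \<notin> E' \<and> insert (i,c) E' \<in> Lset \<alpha> \<tau>"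
    using Lset_alt[OF fin] cnt g by blast
qed

lemma Lset_pos_zero:
  assumes "finite \<tau>" "insert (i,c) E' \<in> Lset \<alpha> \<tau>"
  shows "0 < \<alpha> i \<and> c \<in> \<tau>"
proof -
  obtain r where r: "\<forall>t\<in>\<tau>. \<alpha> (r t) \<noteq> 0" "insert (i,c) E' = (\<lambda>t. (r t, t)) ` \<tau>"
    using assms(2) unfolding Lset_def by blast
  have "(i,c) \<in> (\<lambda>t. (r t, t)) ` \<tau>" using r(2) by blast
  then obtain t where "t \<in> \<tau>" "i = r t" "c = t" by auto
  then show ?thesis using r(1) by auto
qed

lemma pos_lemma:
  assumes fin: "finite \<tau>" and E: "E \<in> Lset \<alpha> \<tau>" and ic: "(i,c) \<in> E"
  shows "card {L'\<in>E. pair_less L' (i,c)} = card {t\<in>\<tau>. t < c}"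
proof -
  obtain r where r: "E = (\<lambda>t. (r t, t)) ` \<tau>" using E Lset_alt[OF fin] by blast
  have rc: "r c = i" using ic r by auto
  have "{L'\<in>E. pair_less L' (i,c)} = (\<lambda>t. (r t, t)) ` {t\<in>\<tau>. t < c}"
    unfolding r using rc by (auto simp: pair_less_def)
  moreover have "inj_on (\<lambda>t. (r t, t)) {t\<in>\<tau>. t < c}" by (auto intro: inj_onI)
  ultimately show ?thesis by (simp add: card_image)
qed



lemma N_split:
  assumes "finite \<tau>" "finite \<sigma>" "c \<in> \<tau>"
  shows "card {(t, s). t \<in> \<tau> \<and> s \<in> \<sigma> \<and> s < t} =
         card {(t, s). t \<in> \<tau> - {c} \<and> s \<in> \<sigma> \<and> s < t} + card {s\<in>\<sigma>. s < c}"
proof -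
  have eq: "{(t, s). t \<in> \<tau> \<and> s \<in> \<sigma> \<and> s < t} =
     {(t, s). t \<in> \<tau> - {c} \<and> s \<in> \<sigma> \<and> s < t} \<union> Pair c ` {s\<in>\<sigma>. s < c}"
    using assms(3) by auto
  have f1: "finite {(t, s). t \<in> \<tau> - {c} \<and> s \<in> \<sigma> \<and> s < t}"
    by (rule finite_subset[of _ "\<tau> \<times> \<sigma>"]) (use assms in auto)
  have f2: "finite (Pair c ` {s\<in>\<sigma>. s < c})" using assms by auto
  have d: "{(t, s). t \<in> \<tau> - {c} \<and> s \<in> \<sigma> \<and> s < t} \<inter> Pair c ` {s\<in>\<sigma>. s < c} = {}" by auto
  show ?thesis unfolding eq card_Un_disjoint[OF f1 f2 d]
    by (simp add: card_image inj_on_def)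
qed

lemma pos_split:
  assumes "finite \<rho>" "\<sigma> \<subseteq> \<rho>"
  shows "card {r\<in>\<rho>. r < c} = card {t\<in>\<rho> - \<sigma>. t < c} + card {s\<in>\<sigma>. s < c}"
proof -
  have eq: "{r\<in>\<rho>. r < c} = {t\<in>\<rho> - \<sigma>. t < c} \<union> {s\<in>\<sigma>. s < c}" using assms by auto
  have "finite \<sigma>" using assms finite_subset by auto
  then show ?thesis unfolding eq using assms by (subst card_Un_disjoint) auto
qed

lemma en_diff_alt:
  "en_diff n x (\<alpha>, \<rho>) b' = (\<Sum>i\<in>{1..n}. \<Sum>c\<in>\<rho>.
        if 0 < \<alpha> i \<and> b' = (\<alpha>(i := \<alpha> i - 1), \<rho> - {c})
        then (-1) ^ card {r\<in>\<rho>. r < c} * x i c else 0)"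
  by (cases b') (simp add: en_diff_def)



lemma sum_if_delta:
  assumes "finite B" "P \<Longrightarrow> X \<in> B"
  shows "(\<Sum>b\<in>B. if P \<and> b = X then f b else 0) = (if P then f X else (0::'a::comm_ring_1))"
  using assms by (cases P) (simp_all add: sum.delta')

lemma basis_case:
  fixes x :: "nat \<Rightarrow> nat \<Rightarrow> 'a::comm_ring_1"
  assumes \<sigma>fin: "finite \<sigma>" and supp: "\<forall>i. \<alpha> i \<noteq> 0 \<longrightarrow> i \<in> {1..n}" and \<rho>fin: "finite \<rho>"
    and T: "finite T" "Lset \<alpha> (\<rho> - \<sigma>) \<subseteq> T"
    and B': "finite B'" "\<forall>i\<in>{1..n}. \<forall>c\<in>\<rho>. (\<alpha>(i:=\<alpha> i - 1), \<rho> - {c}) \<in> B'"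
  shows "(\<Sum>E\<in>T. qmap \<sigma> (\<alpha>,\<rho>) E * koszul x E E') = (\<Sum>b'\<in>B'. en_diff n x (\<alpha>,\<rho>) b' * qmap \<sigma> b' E')"
proof -
  have R1: "(\<Sum>b'\<in>B'. en_diff n x (\<alpha>,\<rho>) b' * qmap \<sigma> b' E') =
      (\<Sum>i\<in>{1..n}. \<Sum>c\<in>\<rho>. if 0 < \<alpha> i then (-1)^card{r\<in>\<rho>. r<c} * x i c * qmap \<sigma> (\<alpha>(i:=\<alpha> i-1), \<rho>-{c}) E' else 0)"
  proof -
    have "(\<Sum>b'\<in>B'. en_diff n x (\<alpha>,\<rho>) b' * qmap \<sigma> b' E') =
       (\<Sum>b'\<in>B'. \<Sum>i\<in>{1..n}. \<Sum>c\<in>\<rho>. if 0 < \<alpha> i \<and> b' = (\<alpha>(i := \<alpha> i - 1), \<rho> - {c})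
            then (-1)^card{r\<in>\<rho>. r<c} * x i c * qmap \<sigma> b' E' else 0)"
      unfolding en_diff_alt sum_distrib_right by (intro sum.cong refl) auto
    also have "\<dots> = (\<Sum>i\<in>{1..n}. \<Sum>b'\<in>B'. \<Sum>c\<in>\<rho>. if 0 < \<alpha> i \<and> b' = (\<alpha>(i := \<alpha> i - 1), \<rho> - {c})
            then (-1)^card{r\<in>\<rho>. r<c} * x i c * qmap \<sigma> b' E' else 0)"
      by (rule sum.swap)
    also have "\<dots> = (\<Sum>i\<in>{1..n}. \<Sum>c\<in>\<rho>. \<Sum>b'\<in>B'. if 0 < \<alpha> i \<and> b' = (\<alpha>(i := \<alpha> i - 1), \<rho> - {c})
            then (-1)^card{r\<in>\<rho>. r<c} * x i c * qmap \<sigma> b' E' else 0)"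
      by (intro sum.cong refl, rule sum.swap)
    also have "\<dots> = (\<Sum>i\<in>{1..n}. \<Sum>c\<in>\<rho>. if 0 < \<alpha> i then (-1)^card{r\<in>\<rho>. r<c} * x i c * qmap \<sigma> (\<alpha>(i:=\<alpha> i-1), \<rho>-{c}) E' else 0)"
      by (intro sum.cong refl sum_if_delta) (use B' in auto)
    finally show ?thesis .
  qed
  show ?thesis
  proof (cases "\<sigma> \<subseteq> \<rho>")
    case False
    have "(\<Sum>E\<in>T. qmap \<sigma> (\<alpha>,\<rho>) E * koszul x E E') = 0"
      using False by (intro sum.neutral) (simp add: qmap_def)
    moreover have "(\<Sum>i\<in>{1..n}. \<Sum>c\<in>\<rho>. if 0 < \<alpha> i then (-1)^card{r\<in>\<rho>. r<c} * x i c * qmap \<sigma> (\<alpha>(i:=\<alpha> i-1), \<rho>-{c}) E' else (0::'a)) = 0"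
      using False by (intro sum.neutral ballI) (auto simp: qmap_def)
    ultimately show ?thesis using R1 by simp
  next
    case True
    define \<tau> where "\<tau> = \<rho> - \<sigma>"
    define N where "N = (\<lambda>\<tau>'. card {(t, s). t \<in> \<tau>' \<and> s \<in> \<sigma> \<and> s < t})"
    define \<alpha>' where "\<alpha>' = (\<lambda>i. \<alpha>(i:=\<alpha> i-1))"
    have \<tau>fin: "finite \<tau>" using \<rho>fin \<tau>_def by auto
    define A where "A = Lset \<alpha> \<tau>"
    define K where "K = {1..n} \<times> \<tau>"
    have Afin: "finite A" unfolding A_def using finite_Lset[OF supp \<tau>fin] .
    have Kfin: "finite K" unfolding K_def using \<tau>fin by auto
    have AK: "E \<in> A \<Longrightarrow> E \<subseteq> K" for E unfolding A_def K_def using Lset_sub[OF supp] by blast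
    have R2: "(\<Sum>i\<in>{1..n}. \<Sum>c\<in>\<rho>. if 0 < \<alpha> i then (-1)^card{r\<in>\<rho>. r<c} * x i c * qmap \<sigma> (\<alpha>(i:=\<alpha> i-1), \<rho>-{c}) E' else 0)
       = (\<Sum>i\<in>{1..n}. \<Sum>c\<in>\<tau>. if 0 < \<alpha> i \<and> E' \<in> Lset (\<alpha>' i) (\<tau> - {c}) then (-1)^card{r\<in>\<rho>. r<c} * x i c * (-1) ^ N (\<tau> - {c}) else 0)"
    proof (rule sum.cong[OF refl])
      fix i
      have "(\<Sum>c\<in>\<rho>. if 0 < \<alpha> i then (-1)^card{r\<in>\<rho>. r<c} * x i c * qmap \<sigma> (\<alpha>(i:=\<alpha> i-1), \<rho>-{c}) E' else 0)
        = (\<Sum>c\<in>\<tau>. if 0 < \<alpha> i then (-1)^card{r\<in>\<rho>. r<c} * x i c * qmap \<sigma> (\<alpha>(i:=\<alpha> i-1), \<rho>-{c}) E' else 0)"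
        by (rule sum.mono_neutral_right) (use \<rho>fin \<tau>_def in \<open>auto simp: qmap_def\<close>)
      also have "\<dots> = (\<Sum>c\<in>\<tau>. if 0 < \<alpha> i \<and> E' \<in> Lset (\<alpha>' i) (\<tau> - {c}) then (-1)^card{r\<in>\<rho>. r<c} * x i c * (-1) ^ N (\<tau> - {c}) else 0)"
      proof (intro sum.cong refl)
        fix c assume c: "c \<in> \<tau>"
        have e1: "\<sigma> \<subseteq> \<rho> - {c}" using True c \<tau>_def by auto
        have e2: "\<rho> - {c} - \<sigma> = \<tau> - {c}" using \<tau>_def by auto
        show "(if 0 < \<alpha> i then (-1)^card{r\<in>\<rho>. r<c} * x i c * qmap \<sigma> (\<alpha>(i:=\<alpha> i-1), \<rho>-{c}) E' else 0)
           = (if 0 < \<alpha> i \<and> E' \<in> Lset (\<alpha>' i) (\<tau> - {c}) then (-1)^card{r\<in>\<rho>. r<c} * x i c * (-1) ^ N (\<tau> - {c}) else 0)"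
          unfolding qmap_def using e1 e2 by (simp add: \<alpha>'_def N_def)
      qed
      finally show "(\<Sum>c\<in>\<rho>. if 0 < \<alpha> i then (-1)^card{r\<in>\<rho>. r<c} * x i c * qmap \<sigma> (\<alpha>(i:=\<alpha> i-1), \<rho>-{c}) E' else 0)
       = (\<Sum>c\<in>\<tau>. if 0 < \<alpha> i \<and> E' \<in> Lset (\<alpha>' i) (\<tau> - {c}) then (-1)^card{r\<in>\<rho>. r<c} * x i c * (-1) ^ N (\<tau> - {c}) else 0)" .
    qed
    have "(\<Sum>E\<in>T. qmap \<sigma> (\<alpha>,\<rho>) E * koszul x E E') = (\<Sum>E\<in>A. (-1) ^ N \<tau> * koszul x E E')"
    proof -
      have "(\<Sum>E\<in>T. qmap \<sigma> (\<alpha>,\<rho>) E * koszul x E E') = (\<Sum>E\<in>A. qmap \<sigma> (\<alpha>,\<rho>) E * koszul x E E')"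
        by (rule sum.mono_neutral_right) (use T A_def \<tau>_def in \<open>auto simp: qmap_def\<close>)
      also have "\<dots> = (\<Sum>E\<in>A. (-1) ^ N \<tau> * koszul x E E')"
        by (intro sum.cong refl) (use True in \<open>simp add: qmap_def A_def \<tau>_def N_def\<close>)
      finally show ?thesis .
    qed
    also have "\<dots> = (\<Sum>E\<in>A. \<Sum>L\<in>K. if L \<in> E \<and> E' = E - {L} then
        (-1) ^ N \<tau> * ((-1) ^ card {L'\<in>E. pair_less L' L} * x (fst L) (snd L)) else 0)"
    proof (intro sum.cong refl)
      fix E assume E: "E \<in> A"
      have "koszul x E E' = (\<Sum>L\<in>K \<inter> E. if E' = E - {L}
        then (-1) ^ card {L'\<in>E. pair_less L' L} * x (fst L) (snd L) else 0)"
        proof -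
        have "K \<inter> E = E" using AK[OF E] by blast
        then show ?thesis unfolding koszul_def by simp
      qed
      also have "\<dots> = (\<Sum>L\<in>K. if L \<in> E then (if E' = E - {L}
        then (-1) ^ card {L'\<in>E. pair_less L' L} * x (fst L) (snd L) else 0) else 0)"
        by (rule sum.inter_restrict[OF Kfin])
      finally show "(-1) ^ N \<tau> * koszul x E E' = (\<Sum>L\<in>K. if L \<in> E \<and> E' = E - {L} then
        (-1) ^ N \<tau> * ((-1) ^ card {L'\<in>E. pair_less L' L} * x (fst L) (snd L)) else 0)"
        by (simp add: sum_distrib_left) (intro sum.cong refl, auto)
    qed
    also have "\<dots> = (\<Sum>L\<in>K. \<Sum>E\<in>A. if L \<in> E \<and> E' = E - {L} then
        (-1) ^ N \<tau> * ((-1) ^ card {L'\<in>E. pair_less L' L} * x (fst L) (snd L)) else 0)"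
      by (rule sum.swap)
    also have "\<dots> = (\<Sum>L\<in>K. if L \<notin> E' \<and> insert L E' \<in> A then
        (-1) ^ N \<tau> * ((-1) ^ card {t\<in>\<tau>. t < snd L} * x (fst L) (snd L)) else 0)"
    proof (intro sum.cong refl)
      fix L assume L: "L \<in> K"
      have "(\<Sum>E\<in>A. if L \<in> E \<and> E' = E - {L} then
        (-1) ^ N \<tau> * ((-1) ^ card {L'\<in>E. pair_less L' L} * x (fst L) (snd L)) else 0)
        = (\<Sum>E\<in>A. if E = insert L E' then (if L \<notin> E' then
        (-1) ^ N \<tau> * ((-1) ^ card {L'\<in>E. pair_less L' L} * x (fst L) (snd L)) else 0) else 0)"
        by (intro sum.cong refl) auto
      also have "\<dots> = (if insert L E' \<in> A then (if L \<notin> E' then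
        (-1) ^ N \<tau> * ((-1) ^ card {L'\<in>insert L E'. pair_less L' L} * x (fst L) (snd L)) else 0) else 0)"
        by (rule sum.delta[OF Afin])
      also have "\<dots> = (if L \<notin> E' \<and> insert L E' \<in> A then
        (-1) ^ N \<tau> * ((-1) ^ card {t\<in>\<tau>. t < snd L} * x (fst L) (snd L)) else 0)"
        using pos_lemma[OF \<tau>fin, of "insert L E'" \<alpha> "fst L" "snd L"] A_def by auto
      finally show "(\<Sum>E\<in>A. if L \<in> E \<and> E' = E - {L} then
        (-1) ^ N \<tau> * ((-1) ^ card {L'\<in>E. pair_less L' L} * x (fst L) (snd L)) else 0)
        = (if L \<notin> E' \<and> insert L E' \<in> A then
        (-1) ^ N \<tau> * ((-1) ^ card {t\<in>\<tau>. t < snd L} * x (fst L) (snd L)) else 0)" .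
    qed
    also have "\<dots> = (\<Sum>i\<in>{1..n}. \<Sum>c\<in>\<tau>. if (i,c) \<notin> E' \<and> insert (i,c) E' \<in> A then
        (-1) ^ N \<tau> * ((-1) ^ card {t\<in>\<tau>. t < c} * x i c) else 0)"
      unfolding K_def sum.cartesian_product' fst_conv snd_conv by (rule refl)
    also have "\<dots> = (\<Sum>i\<in>{1..n}. \<Sum>c\<in>\<tau>. if 0 < \<alpha> i \<and> E' \<in> Lset (\<alpha>' i) (\<tau> - {c}) then (-1)^card{r\<in>\<rho>. r<c} * x i c * (-1) ^ N (\<tau> - {c}) else 0)"
    proof (intro sum.cong refl)
      fix i c assume c: "c \<in> \<tau>"
      have sgn: "(-1::'a) ^ N \<tau> * (-1) ^ card {t\<in>\<tau>. t < c} = (-1)^card{r\<in>\<rho>. r<c} * (-1) ^ N (\<tau> - {c})"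
      proof -
        have "N \<tau> + card {t\<in>\<tau>. t < c} = card{r\<in>\<rho>. r<c} + N (\<tau> - {c})"
          using N_split[OF \<tau>fin \<sigma>fin c] pos_split[OF \<rho>fin True, of c] unfolding N_def \<tau>_def by simp
        then have "(-1::'a) ^ (N \<tau> + card {t\<in>\<tau>. t < c}) = (-1) ^ (card{r\<in>\<rho>. r<c} + N (\<tau> - {c}))"
          by (rule arg_cong)
        then show ?thesis by (simp only: power_add)
      qed
      show "(if (i,c) \<notin> E' \<and> insert (i,c) E' \<in> A then
        (-1) ^ N \<tau> * ((-1) ^ card {t\<in>\<tau>. t < c} * x i c) else 0) =
        (if 0 < \<alpha> i \<and> E' \<in> Lset (\<alpha>' i) (\<tau> - {c}) then (-1)^card{r\<in>\<rho>. r<c} * x i c * (-1) ^ N (\<tau> - {c}) else 0)"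
      proof (cases "0 < \<alpha> i")
        case True
        then show ?thesis using Lkey[of \<tau> c \<alpha> i E', OF \<tau>fin c True] sgn unfolding A_def \<alpha>'_def
          by (simp add: algebra_simps)
      next
        case False
        then show ?thesis using Lset_pos_zero[OF \<tau>fin, of i c E' \<alpha>] unfolding A_def by auto
      qed
    qed
    finally show ?thesis using R1 R2 by simp
  qed
qed



lemma sum_nonzero_ex: "(\<Sum>b\<in>B. f b) \<noteq> (0::'a::comm_monoid_add) \<Longrightarrow> \<exists>b\<in>B. f b \<noteq> 0"
proof (rule ccontr)
  assume a: "(\<Sum>b\<in>B. f b) \<noteq> 0" "\<not> (\<exists>b\<in>B. f b \<noteq> 0)"
  then have "\<forall>b\<in>B. f b = 0" by simp
  then have "(\<Sum>b\<in>B. f b) = 0" by (rule sum.neutral)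
  then show False using a(1) by simp
qed

theorem lemma4p12:
  fixes x :: "nat \<Rightarrow> nat \<Rightarrow> 'a::comm_ring_1"
    and n m l :: nat and \<sigma> :: "nat set"
    and v :: "(nat \<Rightarrow> nat) \<times> nat set \<Rightarrow> 'a"
  assumes "n \<le> m" and "\<sigma> \<subseteq> {1..m}" and "card \<sigma> = n" and "2 \<le> l"
    and "{b. v b \<noteq> 0} \<subseteq> EN_basis n m l"
  shows "lin (koszul x) (lin (qmap \<sigma>) v) = lin (qmap \<sigma>) (lin (en_diff n x) v)"
proof (cases "finite {b. v b \<noteq> 0}")
  case False
  have z1: "lin (qmap \<sigma>) v = (\<lambda>c. 0)" using False by (simp add: lin_def)
  have z2: "lin (en_diff n x) v = (\<lambda>c. 0)" using False by (simp add: lin_def)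
  show ?thesis unfolding z1 z2 by (simp add: lin_def)
next
  case True
  define B where "B = {b. v b \<noteq> 0}"
  have Bfin: "finite B" using True B_def by simp
  have \<sigma>fin: "finite \<sigma>" using assms(2) finite_subset by blast
  have Bprop: "\<And>\<alpha> \<rho>. (\<alpha>, \<rho>) \<in> B \<Longrightarrow> (\<forall>i. \<alpha> i \<noteq> 0 \<longrightarrow> i \<in> {1..n}) \<and> finite \<rho>"
    using assms(5) unfolding B_def EN_basis_def by (auto intro: finite_subset)
  define T where "T = (\<Union>b\<in>B. Lset (fst b) (snd b - \<sigma>))"
  define B' where "B' = (\<Union>b\<in>B. (\<lambda>(i,c). ((fst b)(i := fst b i - 1), snd b - {c})) ` ({1..n} \<times> snd b))"
  have Tfin: "finite T" unfolding T_def
  proof (rule finite_UN_I[OF Bfin])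
    fix b assume "b \<in> B"
    then show "finite (Lset (fst b) (snd b - \<sigma>))"
      using Bprop[of "fst b" "snd b"] finite_Lset[of "fst b" n "snd b - \<sigma>"] by simp
  qed
  have B'fin: "finite B'" unfolding B'_def
    using Bfin Bprop by auto
  define w where "w = lin (qmap \<sigma>) v"
  define u where "u = lin (en_diff n x) v"
  have w_eq: "w E = (\<Sum>b\<in>B. v b * qmap \<sigma> b E)" for E unfolding w_def lin_def B_def by simp
  have u_eq: "u b' = (\<Sum>b\<in>B. v b * en_diff n x b b')" for b' unfolding u_def lin_def B_def by simp
  have wsupp: "{E. w E \<noteq> 0} \<subseteq> T"
  proof
    fix E assume "E \<in> {E. w E \<noteq> 0}"
    then obtain b where b: "b \<in> B" "v b * qmap \<sigma> b E \<noteq> 0" using sum_nonzero_ex w_eq by force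
    obtain \<alpha> \<rho> where br: "b = (\<alpha>, \<rho>)" by fastforce
    have "E \<in> Lset \<alpha> (\<rho> - \<sigma>)" using b(2) unfolding br qmap_def by (auto split: if_splits)
    then show "E \<in> T" unfolding T_def using b(1) br by force
  qed
  have usupp: "{b'. u b' \<noteq> 0} \<subseteq> B'"
  proof
    fix b' assume "b' \<in> {b'. u b' \<noteq> 0}"
    then have "(\<Sum>b\<in>B. v b * en_diff n x b b') \<noteq> 0" using u_eq by simp
    then obtain b where b: "b \<in> B" "v b * en_diff n x b b' \<noteq> 0"
      using sum_nonzero_ex[of "\<lambda>b. v b * en_diff n x b b'" B] by blast
    obtain \<alpha> \<rho> where br: "b = (\<alpha>, \<rho>)" by fastforce
    have "en_diff n x (\<alpha>, \<rho>) b' \<noteq> 0" using b(2) br by auto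
    then obtain i where i: "i \<in> {1..n}" "(\<Sum>c\<in>\<rho>.
        if 0 < \<alpha> i \<and> b' = (\<alpha>(i := \<alpha> i - 1), \<rho> - {c})
        then (-1) ^ card {r\<in>\<rho>. r < c} * x i c else 0) \<noteq> 0"
      unfolding en_diff_alt using sum_nonzero_ex by blast
    then obtain c where c: "c \<in> \<rho>" "(if 0 < \<alpha> i \<and> b' = (\<alpha>(i := \<alpha> i - 1), \<rho> - {c})
        then (-1) ^ card {r\<in>\<rho>. r < c} * x i c else 0) \<noteq> 0"
      using sum_nonzero_ex by blast
    have bb: "b' = (\<alpha>(i := \<alpha> i - 1), \<rho> - {c})" using c(2) by (auto split: if_splits)
    have "(i,c) \<in> {1..n} \<times> \<rho>" using i(1) c(1) by simp
    then have "b' \<in> (\<lambda>(i,c). ((fst b)(i := fst b i - 1), snd b - {c})) ` ({1..n} \<times> snd b)"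
      using bb br by (auto intro: rev_image_eqI)
    then show "b' \<in> B'" unfolding B'_def using b(1) by blast
  qed
  show ?thesis
  proof
    fix E'
    have "lin (koszul x) w E' = (\<Sum>E\<in>T. w E * koszul x E E')"
      by (rule lin_eq[OF Tfin wsupp])
    also have "\<dots> = (\<Sum>E\<in>T. \<Sum>b\<in>B. v b * (qmap \<sigma> b E * koszul x E E'))"
      unfolding w_eq sum_distrib_right by (simp add: mult.assoc)
    also have "\<dots> = (\<Sum>b\<in>B. v b * (\<Sum>E\<in>T. qmap \<sigma> b E * koszul x E E'))"
      by (subst sum.swap) (simp add: sum_distrib_left)
    also have "\<dots> = (\<Sum>b\<in>B. v b * (\<Sum>b'\<in>B'. en_diff n x b b' * qmap \<sigma> b' E'))"
    proof (rule sum.cong[OF refl])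
      fix b assume bB: "b \<in> B"
      obtain \<alpha> \<rho> where br: "b = (\<alpha>, \<rho>)" by fastforce
      have bp: "(\<forall>i. \<alpha> i \<noteq> 0 \<longrightarrow> i \<in> {1..n}) \<and> finite \<rho>" using Bprop bB br by simp
      have "(\<Sum>E\<in>T. qmap \<sigma> (\<alpha>,\<rho>) E * koszul x E E') = (\<Sum>b'\<in>B'. en_diff n x (\<alpha>,\<rho>) b' * qmap \<sigma> b' E')"
      proof (rule basis_case[OF \<sigma>fin _ _ Tfin _ B'fin])
        show "\<forall>i. \<alpha> i \<noteq> 0 \<longrightarrow> i \<in> {1..n}" "finite \<rho>" using bp by auto
        show "Lset \<alpha> (\<rho> - \<sigma>) \<subseteq> T" unfolding T_def using bB br by force
        show "\<forall>i\<in>{1..n}. \<forall>c\<in>\<rho>. (\<alpha>(i:=\<alpha> i - 1), \<rho> - {c}) \<in> B'"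
          unfolding B'_def using bB br by force
      qed
      then show "v b * (\<Sum>E\<in>T. qmap \<sigma> b E * koszul x E E') = v b * (\<Sum>b'\<in>B'. en_diff n x b b' * qmap \<sigma> b' E')"
        using br by simp
    qed
    also have "\<dots> = (\<Sum>b'\<in>B'. \<Sum>b\<in>B. v b * en_diff n x b b' * qmap \<sigma> b' E')"
      by (subst sum.swap) (simp add: sum_distrib_left mult.assoc)
    also have "\<dots> = (\<Sum>b'\<in>B'. u b' * qmap \<sigma> b' E')"
      unfolding u_eq sum_distrib_right ..
    also have "\<dots> = lin (qmap \<sigma>) u E'"
      by (rule lin_eq[OF B'fin usupp, symmetric])
    finally show "lin (koszul x) (lin (qmap \<sigma>) v) E' = lin (qmap \<sigma>) (lin (en_diff n x) v) E'"
      unfolding w_def u_def .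
  qed
qed


end
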